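(* Let $S\subseteq\mathbb N^d$ be a good semigroup, $E\subsetneq S$ a proper good ideal, and $A=S\setminus E=\bigcup_{i=1}^NA_i$ its partition into levels. Let $\boldsymbol\alpha\in\mathbb N^d$ and suppose $\Delta^S(\boldsymbol\alpha)$ is nonempty and contained in $A$. Then all minimal elements of $\Delta^S(\boldsymbol\alpha)$ (with respect to the componentwise order) lie in the same level.
   Context: Notation: on $\mathbb{Z}^d$, $\le$ componentwise, $\boldsymbol\alpha\ll\boldsymbol\beta$ means $\alpha_i<\beta_i$ for all $i$, $\boldsymbol\alpha\le\le\boldsymbol\beta$ means $=$ or $\ll$, $\wedge$ componentwise minimum, $I=\{1,\dots,d\}$. $\Delta^S_F(\boldsymbol\alpha)=\{\boldsymbol\beta\in S:\beta_i=\alpha_i\ (i\in F),\ \beta_j>\alpha_j\ (j\notin F)\}$, $\Delta^S_i=\Delta^S_{\{i\}}$, $\Delta^S(\boldsymbol\alpha)=\bigcup_{i=1}^d\Delta^S_i(\boldsymbol\alpha)$. A good semigroup is a submonoid $S$ of $(\mathbb{N}^d,+)$ closed under $\wedge$ (G1), satisfying (G2): if $\boldsymbol\alpha\neq\boldsymbol\beta\in S$ and $\alpha_i=\beta_i$, there is $\boldsymbol\epsilon\in S$ with $\epsilon_i>\alpha_i$, $\epsilon_j\ge\min\{\alpha_j,\beta_j\}$ for $j\ne i$, with equality if $\alpha_j\ne\beta_j$; and (G3): $\boldsymbol c+\mathbb N^d\subseteq S$ for some $\boldsymbol c$. A good ideal is $E\subseteq S$ with $E+S\subseteq E$ satisfying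 (G1)–(G3). Levels: $\boldsymbol\alpha\in B$ is a complete infimum of $\boldsymbol\beta^{(1)},\dots,\boldsymbol\beta^{(r)}\in B$ ($r\ge2$) if $\boldsymbol\beta^{(j)}\in\Delta^S_{F_j}(\boldsymbol\alpha)$ with $\emptyset\ne F_j\subsetneq I$, $\boldsymbol\beta^{(j)}\wedge\boldsymbol\beta^{(k)}=\boldsymbol\alpha$ ($j\ne k$), $\bigcap F_j=\emptyset$. $B^{(1)}$ = maximal elements of $A$ for $\le\le$, $C^{(1)}$ = those that are complete infima of $r$ elements of $B^{(1)}$ ($1<r\le d$), $D^{(1)}=B^{(1)}\setminus C^{(1)}$; inductively for $A\setminus\bigcup_{j<i}D^{(j)}$; $A=\bigsqcup_{i=1}^ND^{(i)}$, $A_i=D^{(N+1-i)}$. *)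

theory Defs
  imports Main
begin

text \<open>Elements of N^d are functions from a finite index type 'i (so I = UNIV, d = CARD('i))
  to nat. The order \<le> on such functions is componentwise.\<close>

definition vadd :: "('i \<Rightarrow> nat) \<Rightarrow> ('i \<Rightarrow> nat) \<Rightarrow> ('i \<Rightarrow> nat)" where
  "vadd a b = (\<lambda>i. a i + b i)"

definition vmin :: "('i \<Rightarrow> nat) \<Rightarrow> ('i \<Rightarrow> nat) \<Rightarrow> ('i \<Rightarrow> nat)" where
  "vmin a b = (\<lambda>i. min (a i) (b i))"

definition sll :: "('i \<Rightarrow> nat) \<Rightarrow> ('i \<Rightarrow> nat) \<Rightarrow> bool" where
  "sll a b \<longleftrightarrow> (\<forall>i. a i < b i)"

definition G1 :: "('i \<Rightarrow> nat) set \<Rightarrow> bool" where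
  "G1 X \<longleftrightarrow> (\<forall>a\<in>X. \<forall>b\<in>X. vmin a b \<in> X)"

definition G2 :: "('i \<Rightarrow> nat) set \<Rightarrow> bool" where
  "G2 X \<longleftrightarrow> (\<forall>a\<in>X. \<forall>b\<in>X. \<forall>i. a \<noteq> b \<and> a i = b i \<longrightarrow>
     (\<exists>e\<in>X. e i > a i \<and> (\<forall>j. j \<noteq> i \<longrightarrow> e j \<ge> min (a j) (b j)) \<and>
        (\<forall>j. j \<noteq> i \<and> a j \<noteq> b j \<longrightarrow> e j = min (a j) (b j))))"

definition G3 :: "('i \<Rightarrow> nat) set \<Rightarrow> bool" where
  "G3 X \<longleftrightarrow> (\<exists>c. \<forall>v. c \<le> v \<longrightarrow> v \<in> X)"

definition good_semigroup :: "('i \<Rightarrow> nat) set \<Rightarrow> bool" where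
  "good_semigroup S \<longleftrightarrow> (\<lambda>_. 0) \<in> S \<and> (\<forall>a\<in>S. \<forall>b\<in>S. vadd a b \<in> S) \<and> G1 S \<and> G2 S \<and> G3 S"

definition good_ideal :: "('i \<Rightarrow> nat) set \<Rightarrow> ('i \<Rightarrow> nat) set \<Rightarrow> bool" where
  "good_ideal S E \<longleftrightarrow> E \<subseteq> S \<and> (\<forall>a\<in>E. \<forall>s\<in>S. vadd a s \<in> E) \<and> G1 E \<and> G2 E \<and> G3 E"

definition DeltaF :: "('i \<Rightarrow> nat) set \<Rightarrow> 'i set \<Rightarrow> ('i \<Rightarrow> nat) \<Rightarrow> ('i \<Rightarrow> nat) set" where
  "DeltaF S F a = {b\<in>S. (\<forall>i\<in>F. b i = a i) \<and> (\<forall>j. j \<notin> F \<longrightarrow> b j > a j)}"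

definition Delta :: "('i \<Rightarrow> nat) set \<Rightarrow> ('i \<Rightarrow> nat) \<Rightarrow> ('i \<Rightarrow> nat) set" where
  "Delta S a = (\<Union>i. DeltaF S {i} a)"

text \<open>Maximal elements for the order \<le>\<le> (= or \<ll>).\<close>
definition maxll :: "('i \<Rightarrow> nat) set \<Rightarrow> ('i \<Rightarrow> nat) set" where
  "maxll X = {a\<in>X. \<not> (\<exists>b\<in>X. sll a b)}"

text \<open>a is a complete infimum of r elements of B, 1 < r \<le> d. The r elements are
  pairwise distinct (forced by the pairwise-meet condition), so they form a set G;
  F_j is the set of coordinates where the j-th element agrees with a.\<close>
definition complete_infimum :: "('i::finite \<Rightarrow> nat) set \<Rightarrow> ('i \<Rightarrow> nat) set \<Rightarrow> ('i \<Rightarrow> nat) \<Rightarrow> bool" where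
  "complete_infimum S B a \<longleftrightarrow> a \<in> B \<and>
     (\<exists>G. G \<subseteq> B \<and> 2 \<le> card G \<and> card G \<le> card (UNIV :: 'i set) \<and>
        (\<forall>b\<in>G. \<exists>F. F \<noteq> {} \<and> F \<noteq> UNIV \<and> b \<in> DeltaF S F a) \<and>
        (\<forall>b\<in>G. \<forall>b'\<in>G. b \<noteq> b' \<longrightarrow> vmin b b' = a) \<and>
        (\<Inter>b\<in>G. {i. b i = a i}) = {})"

definition level_D :: "('i::finite \<Rightarrow> nat) set \<Rightarrow> ('i \<Rightarrow> nat) set \<Rightarrow> ('i \<Rightarrow> nat) set" where
  "level_D S X = maxll X - {a \<in> maxll X. complete_infimum S (maxll X) a}"

fun remaining :: "('i::finite \<Rightarrow> nat) set \<Rightarrow> ('i \<Rightarrow> nat) set \<Rightarrow> nat \<Rightarrow> ('i \<Rightarrow> nat) set" where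
  "remaining S A 0 = A"
| "remaining S A (Suc n) = remaining S A n - level_D S (remaining S A n)"

text \<open>D^(j) for j \<ge> 1 (the levels A_i are these sets in reverse order).\<close>
definition Dlev :: "('i::finite \<Rightarrow> nat) set \<Rightarrow> ('i \<Rightarrow> nat) set \<Rightarrow> nat \<Rightarrow> ('i \<Rightarrow> nat) set" where
  "Dlev S A j = level_D S (remaining S A (j - 1))"

definition minimal_elems :: "('i \<Rightarrow> nat) set \<Rightarrow> ('i \<Rightarrow> nat) set" where
  "minimal_elems X = {a\<in>X. \<not> (\<exists>b\<in>X. b \<le> a \<and> b \<noteq> a)}"

end

theory Submission
  imports Defs
begin

lemma vmin_apply [simp]: "vmin a b i = min (a i) (b i)"
  by (simp add: vmin_def)

definition surv :: "('i \<Rightarrow> nat) set \<Rightarrow> ('i \<Rightarrow> nat) \<Rightarrow> bool" where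
  "surv X x \<longleftrightarrow> (\<forall>k. \<exists>b\<in>X. x \<le> b \<and> x k < b k)"

lemma min_exists:
  fixes T :: "('i::finite \<Rightarrow> nat) set"
  assumes y0: "y0 \<in> T" and cl: "\<forall>a\<in>T. \<forall>b\<in>T. vmin a b \<in> T"
  shows "\<exists>m\<in>T. \<forall>y\<in>T. m \<le> y"
proof -
  define f where "f = (\<lambda>y::'i\<Rightarrow>nat. \<Sum>i\<in>UNIV. y i)"
  obtain m where m: "m \<in> T" and mmin: "\<And>y. y \<in> T \<Longrightarrow> f m \<le> f y"
    using ex_has_least_nat[of "\<lambda>y. y \<in> T" y0 f] y0 by blast
  have "m \<le> y" if y: "y \<in> T" for y
  proof -
    let ?v = "vmin m y"
    have vT: "?v \<in> T" using cl m y by blast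
    have vle: "\<And>i. ?v i \<le> m i" by simp
    have fle: "f ?v \<le> f m" unfolding f_def by (rule sum_mono) simp
    have fge: "f m \<le> f ?v" using mmin vT .
    have "?v = m"
    proof (rule ccontr)
      assume "?v \<noteq> m"
      then obtain i where "?v i \<noteq> m i" by (metis ext)
      hence "?v i < m i" using vle[of i] by simp
      hence "f ?v < f m" unfolding f_def
        by (intro sum_strict_mono_ex1) auto
      thus False using fle fge by simp
    qed
    hence "m i \<le> y i" for i by (metis min.cobounded2 vmin_apply)
    thus ?thesis by (simp add: le_fun_def)
  qed
  thus ?thesis using m by blast
qed

lemma WC:
  fixes S E X :: "('i::finite \<Rightarrow> nat) set"
  assumes G1S: "G1 S" and G2S: "G2 S" and G1E: "G1 E"
    and XA: "X \<subseteq> S - E"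
    and down: "\<And>z y. z \<in> X \<Longrightarrow> y \<in> S - E \<Longrightarrow> y \<le> z \<Longrightarrow> y \<in> X"
    and xm: "x \<in> maxll X" and sv: "surv X x"
  shows "complete_infimum S (maxll X) x"
proof -
  have xX: "x \<in> X" and xmax: "\<And>b. b \<in> X \<Longrightarrow> \<not> sll x b" using xm by (auto simp: maxll_def)
  have xS: "x \<in> S" and xnE: "x \<notin> E" using xX XA by auto
  define T where "T k = {y\<in>S. x \<le> y \<and> x k < y k}" for k
  have Tne: "\<exists>y. y \<in> T k" for k
  proof -
    obtain b where "b \<in> X" "x \<le> b" "x k < b k" using sv by (auto simp: surv_def)
    thus ?thesis using XA by (auto simp: T_def)
  qed
  have Tcl: "\<forall>a\<in>T k. \<forall>b\<in>T k. vmin a b \<in> T k" for k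
    using G1S by (auto simp: T_def G1_def le_fun_def)
  have "\<forall>k. \<exists>m\<in>T k. \<forall>y\<in>T k. m \<le> y"
    using min_exists Tne Tcl by metis
  then obtain mu where mu: "\<And>k. mu k \<in> T k" and mumin: "\<And>k y. y \<in> T k \<Longrightarrow> mu k \<le> y"
    by metis
  have muS: "mu k \<in> S" and mux: "x \<le> mu k" and muk: "x k < mu k k" for k
    using mu[of k] by (auto simp: T_def)
  have mux': "x i \<le> mu k i" for k i using mux[of k] by (simp add: le_fun_def)
  have mu1: "mu p = mu l" if lp: "x p < mu l p" for l p
  proof -
    have "mu l \<in> T p" using muS mux lp by (auto simp: T_def)
    hence pl: "mu p \<le> mu l" by (rule mumin)
    show ?thesis
    proof (cases "x l < mu p l")
      case True
      hence "mu p \<in> T l" using muS mux by (auto simp: T_def)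
      hence "mu l \<le> mu p" by (rule mumin)
      thus ?thesis using pl by simp
    next
      case False
      hence eq: "x l = mu p l" using mux'[of l p] by auto
      have ne: "x \<noteq> mu p" using muk[of p] by auto
      obtain e where eS: "e \<in> S" and el: "e l > x l"
        and ege: "\<forall>j. j \<noteq> l \<longrightarrow> e j \<ge> min (x j) (mu p j)"
        and eeq: "\<forall>j. j \<noteq> l \<and> x j \<noteq> mu p j \<longrightarrow> e j = min (x j) (mu p j)"
        using G2S xS muS[of p] ne eq unfolding G2_def by blast
      have "x j \<le> e j" for j
      proof (cases "j = l")
        case True thus ?thesis using el by simp
      next
        case False thus ?thesis using ege mux'[of j p] by (metis min.absorb1)
      qed
      hence "e \<in> T l" using eS el by (auto simp: T_def le_fun_def)
      hence "mu l \<le> e" by (rule mumin)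
      hence pe: "mu p \<le> e" using pl by (rule order_trans[rotated])
      have "p \<noteq> l" using False muk[of p] by auto
      hence "e p = x p" using eeq muk[of p] by (metis min.absorb1 less_imp_le less_not_refl)
      thus ?thesis using pe muk[of p] by (simp add: le_fun_def) (metis not_le)
    qed
  qed
  obtain k0 where k0: "(\<exists>k. mu k \<in> E) \<longrightarrow> mu k0 \<in> E" by blast
  obtain c where cX: "c \<in> X" and xc: "x \<le> c" and ck0: "x k0 < c k0"
    using sv by (auto simp: surv_def)
  have cS: "c \<in> S" using cX XA by auto
  have xc': "x i \<le> c i" for i using xc by (simp add: le_fun_def)
  have cmu0: "mu k0 \<le> c" using cS xc ck0 by (intro mumin) (auto simp: T_def)
  have disj: "c p = x p" if "c l = x l" "x p < mu l p" for l p
  proof (rule ccontr)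
    assume "c p \<noteq> x p"
    hence "x p < c p" using xc'[of p] by simp
    hence "mu p \<le> c" using cS xc by (intro mumin) (auto simp: T_def)
    hence "mu l \<le> c" using mu1[OF that(2)] by simp
    hence "mu l l \<le> c l" by (simp add: le_fun_def)
    thus False using that(1) muk[of l] by simp
  qed
  define g where "g l = (if x l < c l then c else mu l)" for l
  define G where "G = range g"
  have gx: "x \<le> g l" for l using xc mux by (simp add: g_def)
  have gl: "x l < g l l" for l using muk by (simp add: g_def)
  have muA: "mu l \<notin> E" if "c l = x l" for l
  proof
    assume "mu l \<in> E"
    hence E0: "mu k0 \<in> E" using k0 by blast
    have "vmin (mu l) (mu k0) = x"
    proof
      fix p
      show "vmin (mu l) (mu k0) p = x p"
      proof (cases "x p < mu l p")
        case True
        hence "c p = x p" using disj that by blast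
        hence "mu k0 p = x p" using cmu0 mux'[of p k0] by (simp add: le_fun_def) (metis le_antisym)
        thus ?thesis using mux'[of p l] by (simp add: min_def)
      next
        case False thus ?thesis using mux'[of p l] mux'[of p k0] by (simp add: min_def)
      qed
    qed
    thus False using G1E \<open>mu l \<in> E\<close> E0 xnE unfolding G1_def by metis
  qed
  have muX: "mu l \<in> X" if "c l = x l" for l
  proof -
    obtain w where "w \<in> X" "x \<le> w" "x l < w l" using sv by (auto simp: surv_def)
    hence "mu l \<le> w" using XA by (intro mumin) (auto simp: T_def)
    thus ?thesis using down[OF \<open>w \<in> X\<close>] muS muA[OF that] by blast
  qed
  have gX: "g l \<in> X" for l using muX cX xc'[of l] by (auto simp: g_def)
  have gmax: "g l \<in> maxll X" for l
  proof -
    have "\<not> sll (g l) w" if "w \<in> X" for w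
    proof
      assume "sll (g l) w"
      hence "sll x w" using gx[of l] by (auto simp: sll_def le_fun_def intro: le_less_trans)
      thus False using xmax that by blast
    qed
    thus ?thesis using gX by (auto simp: maxll_def)
  qed
  have Gsub: "G \<subseteq> maxll X" using gmax by (auto simp: G_def)
  have cardle: "card G \<le> card (UNIV :: 'i set)" unfolding G_def by (rule card_image_le) simp
  obtain p where cp: "c p = x p"
  proof -
    have "\<not> sll x c" using xmax cX by blast
    then obtain p where "\<not> x p < c p" by (auto simp: sll_def)
    thus ?thesis using that xc'[of p] by (metis le_neq_implies_less)
  qed
  have two: "2 \<le> card G"
  proof -
    have "c \<in> G" using ck0 by (auto simp: G_def g_def intro: range_eqI[of _ _ k0])
    moreover have "mu p \<in> G" using cp by (auto simp: G_def g_def intro!: range_eqI[of _ _ p])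
    moreover have "c \<noteq> mu p" using cp muk[of p] by auto
    moreover have "finite G" by (simp add: G_def)
    ultimately have "card {c, mu p} \<le> card G" by (intro card_mono) auto
    thus ?thesis using \<open>c \<noteq> mu p\<close> by simp
  qed
  have faces: "\<exists>F. F \<noteq> {} \<and> F \<noteq> UNIV \<and> b \<in> DeltaF S F x" if bG: "b \<in> G" for b
  proof -
    obtain l where bl: "b = g l" using bG unfolding G_def by blast
    have bX: "b \<in> X" using gX bl by simp
    have bS: "b \<in> S" using bX XA by auto
    define F where "F = {i. b i = x i}"
    have "F \<noteq> {}"
    proof
      assume "F = {}"
      hence "sll x b" using gx[of l] bl by (auto simp: F_def sll_def le_fun_def) (metis le_neq_implies_less)
      thus False using xmax bX by blast
    qed
    moreover have "F \<noteq> UNIV" using gl[of l] bl by (auto simp: F_def set_eq_iff) (metis less_irrefl)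
    moreover have "b \<in> DeltaF S F x" using bS gx[of l] bl
      by (auto simp: DeltaF_def F_def le_fun_def) (metis le_neq_implies_less)
    ultimately show ?thesis by blast
  qed
  have pw: "vmin b b' = x" if bG: "b \<in> G" "b' \<in> G" and bb: "b \<noteq> b'" for b b'
  proof -
    obtain l l' where bl: "b = g l" and bl': "b' = g l'" using bG unfolding G_def by blast
    have key: "b q = x q \<or> b' q = x q" for q
    proof (cases "x l < c l")
      case cl: True
      show ?thesis
      proof (cases "x l' < c l'")
        case True thus ?thesis using cl bl bl' bb by (simp add: g_def)
      next
        case False
        hence "c l' = x l'" using xc'[of l'] by simp
        hence "x q < mu l' q \<longrightarrow> c q = x q" using disj by blast
        thus ?thesis using cl False bl bl' mux'[of q l'] by (auto simp: g_def)
      qed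
    next
      case cl: False
      hence cl0: "c l = x l" using xc'[of l] by simp
      show ?thesis
      proof (cases "x l' < c l'")
        case True
        have "x q < mu l q \<longrightarrow> c q = x q" using disj cl0 by blast
        thus ?thesis using cl True bl bl' mux'[of q l] by (auto simp: g_def)
      next
        case False
        have "mu l \<noteq> mu l'" using cl False bl bl' bb by (simp add: g_def)
        hence "\<not> (x q < mu l q \<and> x q < mu l' q)" using mu1 by metis
        thus ?thesis using cl False bl bl' mux'[of q l] mux'[of q l'] by (auto simp: g_def)
      qed
    qed
    show ?thesis
    proof
      fix q
      have h1: "x q \<le> b q" "x q \<le> b' q" using gx[of l] gx[of l'] bl bl' by (auto simp: le_fun_def)
      show "vmin b b' q = x q" using key[of q] h1 by (auto simp: min_def)
    qed
  qed
  have cover: "(\<Inter>b\<in>G. {i. b i = x i}) = {}"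
  proof -
    have "q \<notin> (\<Inter>b\<in>G. {i. b i = x i})" for q
    proof
      assume "q \<in> (\<Inter>b\<in>G. {i. b i = x i})"
      hence "g q q = x q" by (auto simp: G_def)
      thus False using gl[of q] by simp
    qed
    thus ?thesis by blast
  qed
  show ?thesis unfolding complete_infimum_def
    using xm Gsub two cardle faces pw cover by blast
qed


lemma surv_of_notD:
  fixes S X :: "('i::finite \<Rightarrow> nat) set"
  assumes xX: "x \<in> X" and nD: "x \<notin> level_D S X"
  shows "surv X x"
proof (cases "x \<in> maxll X")
  case True
  hence "complete_infimum S (maxll X) x" using nD by (auto simp: level_D_def)
  then obtain G where G1: "G \<subseteq> maxll X"
    and G2: "\<forall>b\<in>G. \<exists>F. F \<noteq> {} \<and> F \<noteq> UNIV \<and> b \<in> DeltaF S F x"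
    and G3: "(\<Inter>b\<in>G. {i. b i = x i}) = {}"
    unfolding complete_infimum_def by blast
  show ?thesis unfolding surv_def
  proof
    fix k
    have "k \<notin> (\<Inter>b\<in>G. {i. b i = x i})" using G3 by blast
    then obtain b where bG: "b \<in> G" and bk: "b k \<noteq> x k" by blast
    obtain F where bF: "b \<in> DeltaF S F x" using G2 bG by blast
    have "x i \<le> b i" for i using bF by (cases "i \<in> F") (auto simp: DeltaF_def)
    hence "x \<le> b" by (simp add: le_fun_def)
    moreover have "x k < b k" using bF bk by (cases "k \<in> F") (auto simp: DeltaF_def)
    moreover have "b \<in> X" using bG G1 by (auto simp: maxll_def)
    ultimately show "\<exists>b\<in>X. x \<le> b \<and> x k < b k" by blast
  qed
next
  case False
  then obtain b where "b \<in> X" "sll x b" using xX by (auto simp: maxll_def)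
  thus ?thesis unfolding surv_def sll_def le_fun_def by (metis less_imp_le)
qed

lemma surv_char:
  fixes S E X :: "('i::finite \<Rightarrow> nat) set"
  assumes G1S: "G1 S" and G2S: "G2 S" and G1E: "G1 E"
    and XA: "X \<subseteq> S - E"
    and down: "\<And>z y. z \<in> X \<Longrightarrow> y \<in> S - E \<Longrightarrow> y \<le> z \<Longrightarrow> y \<in> X"
    and xX: "x \<in> X"
  shows "x \<in> X - level_D S X \<longleftrightarrow> surv X x"
proof
  assume "x \<in> X - level_D S X"
  thus "surv X x" using surv_of_notD by blast
next
  assume sv: "surv X x"
  show "x \<in> X - level_D S X"
  proof (cases "x \<in> maxll X")
    case True
    have "complete_infimum S (maxll X) x"
      apply (rule WC[OF G1S G2S G1E XA])
      using down True sv by auto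
    thus ?thesis using xX by (auto simp: level_D_def)
  next
    case False thus ?thesis using xX by (auto simp: level_D_def)
  qed
qed

lemma rem_sub: "remaining S A n \<subseteq> A"
  by (induction n) auto

lemma rem_mono: "m \<le> n \<Longrightarrow> remaining S A n \<subseteq> remaining S A m"
proof (induction n)
  case 0 thus ?case by simp
next
  case (Suc n)
  show ?case
  proof (cases "m = Suc n")
    case True thus ?thesis by simp
  next
    case False
    hence "m \<le> n" using Suc.prems by simp
    thus ?thesis using Suc.IH by auto
  qed
qed

lemma down_closed:
  fixes S E :: "('i::finite \<Rightarrow> nat) set"
  assumes G1S: "G1 S" and G2S: "G2 S" and G1E: "G1 E"
  shows "z \<in> remaining S (S - E) n \<Longrightarrow> y \<in> S - E \<Longrightarrow> y \<le> z \<Longrightarrow> y \<in> remaining S (S - E) n"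
proof (induction n arbitrary: z y)
  case 0 thus ?case by simp
next
  case (Suc n)
  let ?R = "remaining S (S - E) n"
  have zR: "z \<in> ?R - level_D S ?R" using Suc.prems(1) by simp
  hence sz: "surv ?R z" using surv_of_notD by blast
  have yR: "y \<in> ?R" using Suc.IH[of z y] zR Suc.prems by blast
  have sy: "surv ?R y"
    unfolding surv_def
  proof
    fix k
    obtain b where "b \<in> ?R" "z \<le> b" "z k < b k" using sz by (auto simp: surv_def)
    moreover have "y \<le> b" using Suc.prems(3) \<open>z \<le> b\<close> by (rule order_trans)
    moreover have "y k < b k" using Suc.prems(3) \<open>z k < b k\<close> by (simp add: le_fun_def) (meson le_less_trans)
    ultimately show "\<exists>b\<in>?R. y \<le> b \<and> y k < b k" by blast
  qed
  have "y \<in> ?R - level_D S ?R"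
    using surv_char[OF G1S G2S G1E rem_sub _ yR] Suc.IH sy by blast
  thus ?case by simp
qed

lemma step_char:
  fixes S E :: "('i::finite \<Rightarrow> nat) set"
  assumes G1S: "G1 S" and G2S: "G2 S" and G1E: "G1 E"
    and xR: "x \<in> remaining S (S - E) n"
  shows "x \<in> remaining S (S - E) (Suc n) \<longleftrightarrow> surv (remaining S (S - E) n) x"
  using surv_char[OF G1S G2S G1E rem_sub _ xR] down_closed[OF G1S G2S G1E] by simp

lemma bound:
  fixes S E :: "('i::finite \<Rightarrow> nat) set"
  assumes cE: "\<And>v. c \<le> v \<Longrightarrow> v \<in> E"
  shows "x \<in> remaining S (S - E) n \<Longrightarrow> n \<le> (\<Sum>i\<in>UNIV. c i - x i)"
proof (induction n arbitrary: x)
  case 0 thus ?case by simp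
next
  case (Suc n)
  let ?R = "remaining S (S - E) n"
  have xR: "x \<in> ?R - level_D S ?R" using Suc.prems by simp
  hence sx: "surv ?R x" using surv_of_notD by blast
  have "x \<in> S - E" using xR rem_sub by blast
  hence "\<not> c \<le> x" using cE by blast
  then obtain k where xk: "x k < c k" by (auto simp: le_fun_def not_le)
  obtain b where bR: "b \<in> ?R" and xb: "x \<le> b" and xbk: "x k < b k" using sx by (auto simp: surv_def)
  have "n \<le> (\<Sum>i\<in>UNIV. c i - b i)" using Suc.IH bR by blast
  moreover have "(\<Sum>i\<in>UNIV. c i - b i) < (\<Sum>i\<in>UNIV. c i - x i)"
  proof (rule sum_strict_mono_ex1)
    show "\<forall>i\<in>UNIV. c i - b i \<le> c i - x i" using xb by (auto simp: le_fun_def diff_le_mono2)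
    show "\<exists>i\<in>UNIV. c i - b i < c i - x i" using xk xbk by (intro bexI[of _ k]) auto
  qed simp
  ultimately show ?case by simp
qed

lemma g2_step:
  fixes S :: "('i \<Rightarrow> nat) set"
  assumes G2S: "G2 S" and pD: "p \<in> DeltaF S {j} \<alpha>" and qS: "q \<in> S" and pq: "p \<le> q"
    and qj: "\<alpha> j < q j" and pk: "p k = q k"
  shows "\<exists>e\<in>S. p \<le> e \<and> p k < e k \<and> e j = \<alpha> j"
proof -
  have pS: "p \<in> S" and pj: "p j = \<alpha> j" using pD by (auto simp: DeltaF_def)
  have ne: "p \<noteq> q" using pj qj by auto
  obtain e where eS: "e \<in> S" and ek: "e k > p k"
    and ege: "\<forall>l. l \<noteq> k \<longrightarrow> e l \<ge> min (p l) (q l)"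
    and eeq: "\<forall>l. l \<noteq> k \<and> p l \<noteq> q l \<longrightarrow> e l = min (p l) (q l)"
    using G2S pS qS ne pk unfolding G2_def by blast
  have pq': "p l \<le> q l" for l using pq by (simp add: le_fun_def)
  have "p l \<le> e l" for l
  proof (cases "l = k")
    case True thus ?thesis using ek by simp
  next
    case False thus ?thesis using ege pq'[of l] by (metis min.absorb1)
  qed
  hence "p \<le> e" by (simp add: le_fun_def)
  moreover have "k \<noteq> j" using pk pj qj by auto
  hence "e j = \<alpha> j" using eeq pj qj pq'[of j] by (metis min.absorb1 less_irrefl)
  ultimately show ?thesis using eS ek by blast
qed

lemma DeltaF_j_mem:
  assumes "p \<in> DeltaF S {j} \<alpha>" "e \<in> S" "p \<le> e" "e j = \<alpha> j"
  shows "e \<in> DeltaF S {j} \<alpha>"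
  using assms by (auto simp: DeltaF_def le_fun_def) (meson less_le_trans)

lemma claim:
  fixes S E :: "('i::finite \<Rightarrow> nat) set"
  assumes G1S: "G1 S" and G2S: "G2 S" and G1E: "G1 E"
    and DA: "DeltaF S {j} \<alpha> \<subseteq> S - E"
  shows "p \<in> DeltaF S {j} \<alpha> \<Longrightarrow> q \<in> remaining S (S - E) r \<Longrightarrow> p \<le> q \<Longrightarrow> \<alpha> j < q j
     \<Longrightarrow> surv (remaining S (S - E) r) p"
proof (induction r arbitrary: p q)
  case 0
  show ?case unfolding surv_def
  proof
    fix k
    show "\<exists>b\<in>remaining S (S - E) 0. p \<le> b \<and> p k < b k"
    proof (cases "p k < q k")
      case True thus ?thesis using "0.prems" by blast
    next
      case False
      hence pk: "p k = q k" using "0.prems"(3) by (simp add: le_fun_def) (meson le_antisym not_le)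
      have qS: "q \<in> S" using "0.prems"(2) by simp
      obtain e where "e \<in> S" "p \<le> e" "p k < e k" "e j = \<alpha> j"
        using g2_step[OF G2S "0.prems"(1) qS "0.prems"(3,4) pk] by blast
      moreover hence "e \<in> S - E" using DeltaF_j_mem[OF "0.prems"(1)] DA by blast
      ultimately show ?thesis by auto
    qed
  qed
next
  case (Suc r)
  let ?R = "remaining S (S - E) r"
  let ?R' = "remaining S (S - E) (Suc r)"
  have pD: "p \<in> DeltaF S {j} \<alpha>" and qR: "q \<in> ?R'" and pq: "p \<le> q" and qj: "\<alpha> j < q j"
    using Suc.prems by auto
  have qR0: "q \<in> ?R" using qR by simp
  have qS: "q \<in> S" using qR rem_sub by blast
  show ?case unfolding surv_def
  proof
    fix k
    show "\<exists>b\<in>?R'. p \<le> b \<and> p k < b k"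
    proof (cases "p k < q k")
      case True thus ?thesis using qR pq by blast
    next
      case False
      hence pk: "p k = q k" using pq by (simp add: le_fun_def) (meson le_antisym not_le)
      define W where "W = {e\<in>S. p \<le> e \<and> p k < e k \<and> e j = \<alpha> j}"
      obtain e0 where "e0 \<in> W" using g2_step[OF G2S pD qS pq qj pk] by (auto simp: W_def)
      moreover have "\<forall>a\<in>W. \<forall>b\<in>W. vmin a b \<in> W"
        using G1S by (auto simp: W_def G1_def le_fun_def)
      ultimately obtain p' where p'W: "p' \<in> W" and p'min: "\<forall>y\<in>W. p' \<le> y"
        using min_exists by metis
      have p'S: "p' \<in> S" and pp': "p \<le> p'" and p'k: "p k < p' k" and p'j: "p' j = \<alpha> j"
        using p'W by (auto simp: W_def)
      have p'D: "p' \<in> DeltaF S {j} \<alpha>" using DeltaF_j_mem[OF pD p'S pp' p'j] .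
      hence p'A: "p' \<in> S - E" using DA by blast
      show ?thesis
      proof (cases "p' \<in> ?R'")
        case True thus ?thesis using pp' p'k by blast
      next
        case False
        have sq: "surv ?R q" using step_char[OF G1S G2S G1E qR0] qR by blast
        obtain c where cR: "c \<in> ?R" and qc: "q \<le> c" and qck: "q k < c k"
          using sq by (auto simp: surv_def)
        have cS: "c \<in> S" using cR rem_sub by blast
        have pc: "p \<le> c" using pq qc by (rule order_trans)
        have cj: "\<alpha> j < c j" using qj qc by (simp add: le_fun_def) (meson less_le_trans)
        have "vmin c p' \<in> W"
          using G1S cS p'S pc pp' qck pk p'k cj p'j
          by (auto simp: W_def G1_def le_fun_def min_def)
        hence "p' \<le> vmin c p'" using p'min by blast
        hence p'c: "p' \<le> c" by (auto simp: le_fun_def min_def split: if_splits) (metis le_trans nat_le_linear)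
        have p'R: "p' \<in> ?R" using down_closed[OF G1S G2S G1E cR p'A p'c] .
        have "surv ?R p'" using Suc.IH[OF p'D cR p'c cj] .
        hence "p' \<in> ?R'" using step_char[OF G1S G2S G1E p'R] by blast
        thus ?thesis using False by blast
      qed
    qed
  qed
qed


lemma main_dir:
  fixes S E :: "('i::finite \<Rightarrow> nat) set"
  assumes G1S: "G1 S" and G2S: "G2 S" and G1E: "G1 E"
    and DA: "Delta S \<alpha> \<subseteq> S - E"
    and bm: "\<beta> \<in> minimal_elems (Delta S \<alpha>)" and gm: "\<gamma> \<in> minimal_elems (Delta S \<alpha>)"
  shows "\<beta> \<in> remaining S (S - E) n \<Longrightarrow> \<gamma> \<in> remaining S (S - E) n"
proof (induction n)
  case 0 thus ?case using gm DA by (auto simp: minimal_elems_def)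
next
  case (Suc n)
  let ?R = "remaining S (S - E) n"
  have bR: "\<beta> \<in> ?R" using Suc.prems by simp
  hence gR: "\<gamma> \<in> ?R" using Suc.IH by blast
  have sb: "surv ?R \<beta>" using step_char[OF G1S G2S G1E bR] Suc.prems by blast
  obtain i where bi: "\<beta> \<in> DeltaF S {i} \<alpha>" using bm by (auto simp: minimal_elems_def Delta_def)
  obtain j where gj: "\<gamma> \<in> DeltaF S {j} \<alpha>" using gm by (auto simp: minimal_elems_def Delta_def)
  obtain b where bRn: "b \<in> ?R" and bb: "\<beta> \<le> b" and bbi: "\<beta> i < b i"
    using sb by (auto simp: surv_def)
  have bS: "b \<in> S" using bRn rem_sub by blast
  have bgt: "\<alpha> l < b l" for l
  proof (cases "l = i")
    case True thus ?thesis using bi bbi by (auto simp: DeltaF_def)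
  next
    case False
    hence "\<alpha> l < \<beta> l" using bi by (auto simp: DeltaF_def)
    thus ?thesis using bb by (simp add: le_fun_def) (meson less_le_trans)
  qed
  let ?v = "vmin \<gamma> b"
  have gS: "\<gamma> \<in> S" using gj by (auto simp: DeltaF_def)
  have "?v \<in> DeltaF S {j} \<alpha>"
    using G1S gS bS gj bgt by (auto simp: DeltaF_def G1_def min_def less_imp_le)
  hence vD: "?v \<in> Delta S \<alpha>" by (auto simp: Delta_def)
  have "?v \<le> \<gamma>" by (simp add: le_fun_def)
  hence "?v = \<gamma>" using gm vD by (auto simp: minimal_elems_def)
  hence gb: "\<gamma> \<le> b" by (metis le_fun_def min.cobounded2 vmin_apply)
  have DjA: "DeltaF S {j} \<alpha> \<subseteq> S - E" using DA by (auto simp: Delta_def)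
  have "surv ?R \<gamma>" using claim[OF G1S G2S G1E DjA gj bRn gb bgt] .
  thus ?case using step_char[OF G1S G2S G1E gR] by blast
qed

lemma exit_stage:
  assumes "x \<in> remaining S A 0" "x \<notin> remaining S A N"
  shows "\<exists>n. x \<in> remaining S A n \<and> x \<notin> remaining S A (Suc n)"
  using assms
proof (induction N)
  case 0 thus ?case by simp
next
  case (Suc N)
  show ?case
  proof (cases "x \<in> remaining S A N")
    case True thus ?thesis using Suc.prems by blast
  next
    case False thus ?thesis using Suc.IH Suc.prems by blast
  qed
qed

theorem lemma2p8:
  fixes S E :: "('i::finite \<Rightarrow> nat) set" and \<alpha> :: "'i \<Rightarrow> nat"
  assumes "good_semigroup S" and "good_ideal S E" and "E \<noteq> S"
    and "Delta S \<alpha> \<noteq> {}" and "Delta S \<alpha> \<subseteq> S - E"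
  shows "\<forall>\<beta>\<in>minimal_elems (Delta S \<alpha>). \<forall>\<gamma>\<in>minimal_elems (Delta S \<alpha>).
           \<exists>j\<ge>1. \<beta> \<in> Dlev S (S - E) j \<and> \<gamma> \<in> Dlev S (S - E) j"
proof (intro ballI)
  fix \<beta> \<gamma>
  assume bm: "\<beta> \<in> minimal_elems (Delta S \<alpha>)" and gm: "\<gamma> \<in> minimal_elems (Delta S \<alpha>)"
  have G1S: "G1 S" and G2S: "G2 S" using assms(1) by (auto simp: good_semigroup_def)
  have G1E: "G1 E" and G3E: "G3 E" using assms(2) by (auto simp: good_ideal_def)
  obtain c where cE: "\<And>v. c \<le> v \<Longrightarrow> v \<in> E" using G3E by (auto simp: G3_def)
  have DA: "Delta S \<alpha> \<subseteq> S - E" by fact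
  have b0: "\<beta> \<in> remaining S (S - E) 0" using bm DA by (auto simp: minimal_elems_def)
  let ?N = "Suc (\<Sum>i\<in>UNIV. c i - \<beta> i)"
  have "\<beta> \<notin> remaining S (S - E) ?N"
  proof
    assume "\<beta> \<in> remaining S (S - E) ?N"
    hence "?N \<le> (\<Sum>i\<in>UNIV. c i - \<beta> i)" using bound[where c=c and E=E and S=S, OF cE] by blast
    thus False by simp
  qed
  then obtain n where bn: "\<beta> \<in> remaining S (S - E) n" and bn1: "\<beta> \<notin> remaining S (S - E) (Suc n)"
    using exit_stage[OF b0] by blast
  have gn: "\<gamma> \<in> remaining S (S - E) n" using main_dir[OF G1S G2S G1E DA bm gm] bn .
  have gn1: "\<gamma> \<notin> remaining S (S - E) (Suc n)" using main_dir[OF G1S G2S G1E DA gm bm] bn1 by blast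
  have "\<beta> \<in> Dlev S (S - E) (Suc n)" "\<gamma> \<in> Dlev S (S - E) (Suc n)"
    using bn bn1 gn gn1 by (auto simp: Dlev_def)
  thus "\<exists>j\<ge>1. \<beta> \<in> Dlev S (S - E) j \<and> \<gamma> \<in> Dlev S (S - E) j" by (intro exI[of _ "Suc n"]) simp
qed

end
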